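(* Let $Z=Z(t)$ be the unique formal power series in $t$ with $Z(0)=0$ and $Z=t(1+Z)^4/(1+Z^2)$, and let $\mu=\mu(t,u)$ be the unique formal power series in $t$ satisfying $$\mu=(u-1)\frac{(1+Z^2)(1+\mu Z)(1+\mu Z^2)(1+\mu Z^3)}{(1+Z)(1+Z+Z^2)(1-Z)^3(1-\mu Z^2)}.$$ Write $v=\frac{(u-1)Z(1+Z^2)}{(1+Z)(1+Z+Z^2)(1-Z)^3}$. Then $$\mu(t,u)=\frac{1}{Z^2}\left(\frac{2}{1+v(1-Z)^2/3+\frac23\sqrt{3+v^2(1-Z)^4}\,\cos(\phi/3)}-1\right),$$ where $\phi=\arccos\left(\dfrac{-9v(1+4Z+Z^2)+v^3(1-Z)^6}{(3+v^2(1-Z)^4)^{3/2}}\right)$. *)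

theory Defs
  imports "HOL-Analysis.Analysis" "HOL-Computational_Algebra.Formal_Power_Series"
begin

text \<open>The closed-form right-hand side, as a real function of the value z = Z(t)
  (and the parameter u).\<close>

definition v_of :: "real \<Rightarrow> real \<Rightarrow> real" where
  "v_of u z = (u - 1) * z * (1 + z^2) / ((1 + z) * (1 + z + z^2) * (1 - z)^3)"

definition phi_of :: "real \<Rightarrow> real \<Rightarrow> real" where
  "phi_of u z = (let v = v_of u z in
     arccos ((- 9 * v * (1 + 4 * z + z^2) + v^3 * (1 - z)^6)
             / (3 + v^2 * (1 - z)^4) powr (3/2)))"

definition mu_closed_form :: "real \<Rightarrow> real \<Rightarrow> real" where
  "mu_closed_form u z = (let v = v_of u z in
     (1 / z^2) * (2 / (1 + v * (1 - z)^2 / 3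
                       + (2/3) * sqrt (3 + v^2 * (1 - z)^4) * cos (phi_of u z / 3)) - 1))"

end

theory Submission
  imports Defs
begin


definition TT :: "real fps \<Rightarrow> nat \<Rightarrow> real \<Rightarrow> real" where
  "TT A N r = (\<Sum>n\<le>N. \<bar>fps_nth A n\<bar> * r ^ n)"

lemma TT_nonneg: "r \<ge> 0 \<Longrightarrow> TT A N r \<ge> 0"
  unfolding TT_def by (intro sum_nonneg) auto

lemma TT_mono: "r \<ge> 0 \<Longrightarrow> N \<le> N' \<Longrightarrow> TT A N r \<le> TT A N' r"
  unfolding TT_def by (intro sum_mono2) auto

lemma TT_add: "TT A N r \<le> a \<Longrightarrow> TT B N r \<le> b \<Longrightarrow> r \<ge> 0 \<Longrightarrow> TT (A + B) N r \<le> a + b"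
proof -
  assume a: "TT A N r \<le> a" and b: "TT B N r \<le> b" and r: "r \<ge> 0"
  have "TT (A + B) N r \<le> TT A N r + TT B N r"
    unfolding TT_def sum.distrib[symmetric]
    using r by (intro sum_mono) (auto simp: distrib_right[symmetric] intro!: mult_right_mono abs_triangle_ineq)
  thus ?thesis using a b by linarith
qed

lemma TT_uminus [simp]: "TT (- A) N r = TT A N r"
  unfolding TT_def by simp

lemma TT_diff: "TT A N r \<le> a \<Longrightarrow> TT B N r \<le> b \<Longrightarrow> r \<ge> 0 \<Longrightarrow> TT (A - B) N r \<le> a + b"
  using TT_add[of "A" N r a "-B" b] by simp

lemma TT_const [simp]: "TT (fps_const c) N r = \<bar>c\<bar>"
  unfolding TT_def by (simp add: sum.atMost_shift)

lemma TT_zero [simp]: "TT 0 N r = 0"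
  unfolding TT_def by simp

lemma TT_one [simp]: "TT 1 N r = 1"
  using TT_const[of 1] by simp

lemma TT_X: "r \<ge> 0 \<Longrightarrow> TT fps_X N r \<le> r"
  unfolding TT_def
proof -
  assume r: "r \<ge> 0"
  have "(\<Sum>n\<le>N. \<bar>fps_nth fps_X n\<bar> * r ^ n) = (\<Sum>n\<in>{..N}\<inter>{1}. r ^ n)"
    by (rule sum.mono_neutral_cong_right) (auto simp: fps_X_def)
  also have "\<dots> \<le> r" using r by (cases N) auto
  finally show "(\<Sum>n\<le>N. \<bar>fps_nth fps_X n\<bar> * r ^ n) \<le> r" .
qed

lemma TT_mult_tri:
  assumes r: "r \<ge> 0"
  shows "TT (A * B) N r \<le> (\<Sum>(i,j)\<in>{(i,j). i+j \<le> N}. (\<bar>fps_nth A i\<bar> * r^i) * (\<bar>fps_nth B j\<bar> * r^j))"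
proof -
  have "TT (A * B) N r \<le> (\<Sum>n\<le>N. \<Sum>i\<le>n. (\<bar>fps_nth A i\<bar> * r^i) * (\<bar>fps_nth B (n-i)\<bar> * r^(n-i)))"
    unfolding TT_def fps_mult_nth
  proof (intro sum_mono)
    fix n assume "n \<in> {..N}"
    have "\<bar>\<Sum>i = 0..n. fps_nth A i * fps_nth B (n - i)\<bar> * r ^ n \<le> (\<Sum>i = 0..n. \<bar>fps_nth A i * fps_nth B (n - i)\<bar>) * r ^ n"
      by (intro mult_right_mono sum_abs) (use r in auto)
    also have "\<dots> = (\<Sum>i\<le>n. (\<bar>fps_nth A i\<bar> * r^i) * (\<bar>fps_nth B (n-i)\<bar> * r^(n-i)))"
      unfolding atLeast0AtMost sum_distrib_right
    proof (intro sum.cong refl)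
      fix i assume "i \<in> {..n}"
      hence "r ^ n = r ^ i * r ^ (n - i)" by (simp add: power_add[symmetric])
      thus "\<bar>fps_nth A i * fps_nth B (n - i)\<bar> * r ^ n = (\<bar>fps_nth A i\<bar> * r^i) * (\<bar>fps_nth B (n-i)\<bar> * r^(n-i))"
        by (simp add: abs_mult mult_ac)
    qed
    finally show "\<bar>\<Sum>i = 0..n. fps_nth A i * fps_nth B (n - i)\<bar> * r ^ n \<le> (\<Sum>i\<le>n. (\<bar>fps_nth A i\<bar> * r^i) * (\<bar>fps_nth B (n-i)\<bar> * r^(n-i)))" .
  qed
  also have "\<dots> = (\<Sum>(i,j)\<in>{(i,j). i+j \<le> N}. (\<bar>fps_nth A i\<bar> * r^i) * (\<bar>fps_nth B j\<bar> * r^j))"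
    by (rule sum.triangle_reindex_eq[symmetric])
  finally show ?thesis .
qed

lemma fin_tri: "finite {(i,j). i+j \<le> (N::nat)}"
proof -
  have "{(i,j). i+j \<le> N} \<subseteq> {..N} \<times> {..N}" by auto
  thus ?thesis by (rule finite_subset) auto
qed

lemma TT_mult_gen:
  assumes r: "r \<ge> 0" and sub: "\<And>i j. i + j \<le> N \<Longrightarrow> \<bar>fps_nth A i\<bar> * \<bar>fps_nth B j\<bar> \<noteq> 0 \<Longrightarrow> i \<le> N1 \<and> j \<le> N2"
  shows "TT (A * B) N r \<le> TT A N1 r * TT B N2 r"
proof -
  let ?f = "\<lambda>(i,j). (\<bar>fps_nth A i\<bar> * r^i) * (\<bar>fps_nth B j\<bar> * r^j)"
  have "TT (A * B) N r \<le> sum ?f {(i,j). i+j \<le> N}" by (rule TT_mult_tri[OF r])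
  also have "\<dots> = sum ?f ({(i,j). i+j \<le> N} \<inter> ({..N1} \<times> {..N2}))"
    by (rule sum.mono_neutral_right) (auto simp: fin_tri dest: sub)
  also have "\<dots> \<le> sum ?f ({..N1} \<times> {..N2})"
    by (rule sum_mono2) (use r in auto)
  also have "\<dots> = TT A N1 r * TT B N2 r"
    unfolding TT_def sum_product sum.cartesian_product by simp
  finally show ?thesis .
qed

lemma TT_mult_le: "r \<ge> 0 \<Longrightarrow> TT (A * B) N r \<le> TT A N r * TT B N r"
  by (rule TT_mult_gen) auto

lemma TT_mult0_le: "r \<ge> 0 \<Longrightarrow> fps_nth A 0 = 0 \<Longrightarrow> TT (A * B) N r \<le> TT A N r * TT B (N - 1) r"
  by (rule TT_mult_gen) (auto, metis gr0I le_diff_conv2 Suc_leI add.commute add_le_cancel_left le_trans diff_le_self)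

lemma TT_mult: "r \<ge> 0 \<Longrightarrow> TT A N r \<le> a \<Longrightarrow> TT B N r \<le> b \<Longrightarrow> TT (A * B) N r \<le> a * b"
  by (meson TT_mult_le TT_nonneg mult_mono order_trans)

lemma TT_mult0: "r \<ge> 0 \<Longrightarrow> fps_nth A 0 = 0 \<Longrightarrow> TT A N r \<le> a \<Longrightarrow> TT B (N - 1) r \<le> b \<Longrightarrow> TT (A * B) N r \<le> a * b"
  by (meson TT_mult0_le TT_nonneg mult_mono order_trans)

lemma TT_power: "r \<ge> 0 \<Longrightarrow> TT A N r \<le> a \<Longrightarrow> TT (A ^ n) N r \<le> a ^ n"
  by (induction n) (auto intro!: TT_mult)

lemma TT_mult1:
  assumes r: "r \<ge> 0" and a: "TT (A - 1) N r \<le> a - 1" and b: "TT (B - 1) N r \<le> b - 1"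
  shows "TT (A * B - 1) N r \<le> a * b - 1"
proof -
  have "A * B - 1 = (A - 1) * (B - 1) + (A - 1) + (B - 1)" by (simp add: algebra_simps)
  moreover have "TT ((A - 1) * (B - 1) + (A - 1) + (B - 1)) N r \<le> (a - 1) * (b - 1) + (a - 1) + (b - 1)"
    by (intro TT_add TT_mult a b r)
  ultimately show ?thesis by (simp add: algebra_simps)
qed

lemma TT_power1:
  assumes r: "r \<ge> 0" and a: "TT (A - 1) N r \<le> a - 1"
  shows "TT (A ^ n - 1) N r \<le> a ^ n - 1"
proof (induction n)
  case 0 thus ?case by simp
next
  case (Suc n)
  have "TT (A * A ^ n - 1) N r \<le> a * a ^ n - 1"
    by (rule TT_mult1[OF r a Suc])
  thus ?case by simp
qed

lemma TT_leaf: "TT C N r \<le> x \<Longrightarrow> TT ((1 + C) - 1) N r \<le> (1 + x) - 1"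
  by simp



lemma Z_bound:
  fixes Z :: "real fps"
  assumes Z0: "fps_nth Z 0 = 0" and Zp: "Z = fps_X * (1+Z)^4 - Z * Z^2"
    and z: "0 < \<zeta>" "\<zeta> \<le> 1/2" and r: "r = \<zeta>/32"
  shows "TT Z N r \<le> \<zeta>"
proof (induction N)
  case 0 thus ?case using Z0 z by (simp add: TT_def)
next
  case (Suc N)
  have r0: "r \<ge> 0" using r z by simp
  define T where "T = TT Z (Suc N) r"
  have h1: "TT (fps_X * (1+Z)^4) (Suc N) r \<le> r * (1+\<zeta>)^4"
  proof -
    have "TT ((1+Z)^4) N r \<le> (1+\<zeta>)^4" by (intro TT_power TT_add r0 Suc) simp
    thus ?thesis by (intro TT_mult0 TT_X r0) auto
  qed
  have h2: "TT (Z * Z^2) (Suc N) r \<le> T * \<zeta>^2"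
    by (intro TT_mult0 TT_power r0 Z0) (auto simp: T_def Suc)
  have "T \<le> r * (1+\<zeta>)^4 + T * \<zeta>^2"
    unfolding T_def by (subst Zp) (intro TT_diff h1 h2[unfolded T_def] r0)
  hence hT: "T * (1 - \<zeta>^2) \<le> r * (1+\<zeta>)^4" by (simp add: algebra_simps)
  have zz: "\<zeta>^2 \<le> 1/4" unfolding power2_eq_square
    by (rule order_trans[OF mult_mono[of \<zeta> "1/2" \<zeta> "1/2"]]) (use z in auto)
  moreover have "r * (1+\<zeta>)^4 \<le> \<zeta> * (1 - \<zeta>^2)"
  proof -
    have "(1+\<zeta>)^4 \<le> (3/2)^4" by (intro power_mono) (use z in auto)
    hence "r * (1+\<zeta>)^4 \<le> \<zeta>/32 * (3/2)^4" unfolding r using z by (intro mult_left_mono) auto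
    also have "\<dots> \<le> \<zeta> * (3/4)" using z by (simp add: power_divide)
    also have "\<zeta> * (3/4) \<le> \<zeta> * (1 - \<zeta>^2)" using z zz by (intro mult_left_mono) auto
    finally show ?thesis .
  qed
  moreover have "1 - \<zeta>^2 > 0" using zz by linarith
  ultimately have "T * (1 - \<zeta>^2) \<le> \<zeta> * (1 - \<zeta>^2)" using hT by linarith
  thus ?case using \<open>1 - \<zeta>^2 > 0\<close> unfolding T_def by simp
qed


lemma TT_mult0S: "r \<ge> 0 \<Longrightarrow> fps_nth A 0 = 0 \<Longrightarrow> TT A (Suc N) r \<le> a \<Longrightarrow> TT B N r \<le> b \<Longrightarrow> TT (A * B) (Suc N) r \<le> a * b"
  using TT_mult0[of r A "Suc N" a B b] by simp

definition d1 :: "real \<Rightarrow> real" where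
  "d1 \<zeta> = (1+\<zeta>*1)*(1+\<zeta>*(1+\<zeta>))*(1+\<zeta>*1)^3 - 1"

definition GG :: "real \<Rightarrow> real \<Rightarrow> real \<Rightarrow> real" where
  "GG k M \<zeta> = \<bar>k\<bar> * ((1+\<zeta>*\<zeta>)*(1+\<zeta>*M)*(1+\<zeta>*(M*\<zeta>))*(1+\<zeta>*(M*\<zeta>^2)) - 1)
      + \<zeta>*(M^2*\<zeta>*(1 + d1 \<zeta>)) + d1 \<zeta> * M"

lemma mu_bound:
  fixes Z \<mu> :: "real fps"
  assumes Z0: "fps_nth Z 0 = 0" and \<mu>0: "fps_nth \<mu> 0 = k"
    and ZB: "\<And>N. TT Z N r \<le> \<zeta>" and r0: "r \<ge> 0"
    and D: "D = (1 + Z*1) * (1 + Z*(1+Z)) * (1 + Z*(-1))^3"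
    and P: "P = (1 + Z*Z) * (1 + Z*\<mu>) * (1 + Z*(\<mu>*Z)) * (1 + Z*(\<mu>*Z^2))"
    and eq: "\<mu> = fps_const k + fps_const k * (P - 1) + Z*(\<mu>^2*Z*D) - (D-1)*\<mu>"
    and M: "M = \<bar>k\<bar> + 1" and G: "GG k M \<zeta> \<le> 1"
  shows "TT \<mu> N r \<le> M"
proof (induction N)
  case 0 thus ?case using \<mu>0 M by (simp add: TT_def)
next
  case (Suc N)
  have z0: "\<zeta> \<ge> 0" using ZB[of 0] TT_nonneg[OF r0, of Z 0] by linarith
  have Dm1: "TT (D - 1) n r \<le> d1 \<zeta>" for n
    unfolding D d1_def
    by (intro TT_mult1 TT_power1 r0 TT_leaf) (auto intro!: TT_mult ZB r0 TT_add)
  have DD: "TT D n r \<le> 1 + d1 \<zeta>" for n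
    using TT_add[OF Dm1 TT_one[THEN eq_refl] r0, of n] by (simp add: add.commute)
  have D0: "fps_nth D 0 = 1" unfolding D using Z0 by (simp add: fps_nth_power_0)
  have hP: "TT (P - 1) (Suc N) r \<le> (1+\<zeta>*\<zeta>)*(1+\<zeta>*M)*(1+\<zeta>*(M*\<zeta>))*(1+\<zeta>*(M*\<zeta>^2)) - 1"
  proof -
    have l1: "TT (Z*Z) (Suc N) r \<le> \<zeta>*\<zeta>" by (intro TT_mult ZB r0)
    have l2: "TT (Z*\<mu>) (Suc N) r \<le> \<zeta>*M" by (rule TT_mult0S[OF r0 Z0 ZB Suc])
    have l3: "TT (Z*(\<mu>*Z)) (Suc N) r \<le> \<zeta>*(M*\<zeta>)" 
      by (rule TT_mult0S[OF r0 Z0 ZB TT_mult[OF r0 Suc ZB]])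
    have l4: "TT (Z*(\<mu>*Z^2)) (Suc N) r \<le> \<zeta>*(M*\<zeta>^2)" 
      by (rule TT_mult0S[OF r0 Z0 ZB TT_mult[OF r0 Suc TT_power[OF r0 ZB]]])
    show ?thesis unfolding P by (intro TT_mult1 r0 TT_leaf l1 l2 l3 l4)
  qed
  have h1: "TT (fps_const k * (P - 1)) (Suc N) r \<le> \<bar>k\<bar> * ((1+\<zeta>*\<zeta>)*(1+\<zeta>*M)*(1+\<zeta>*(M*\<zeta>))*(1+\<zeta>*(M*\<zeta>^2)) - 1)"
    by (intro TT_mult hP r0) simp
  have h2: "TT (Z*(\<mu>^2*Z*D)) (Suc N) r \<le> \<zeta>*(M^2*\<zeta>*(1 + d1 \<zeta>))"
    by (intro TT_mult0S TT_mult TT_power ZB Z0 r0 DD Suc)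
  have h3: "TT ((D-1)*\<mu>) (Suc N) r \<le> d1 \<zeta> * M"
    by (intro TT_mult0S Dm1 r0 Suc) (simp add: D0)
  have "TT \<mu> (Suc N) r \<le> \<bar>k\<bar> + \<bar>k\<bar> * ((1+\<zeta>*\<zeta>)*(1+\<zeta>*M)*(1+\<zeta>*(M*\<zeta>))*(1+\<zeta>*(M*\<zeta>^2)) - 1)
      + \<zeta>*(M^2*\<zeta>*(1 + d1 \<zeta>)) + d1 \<zeta> * M"
    by (subst eq) (intro TT_add TT_diff h1 h2 h3 r0 TT_const[THEN eq_refl])
  also have "\<dots> \<le> M" using G M unfolding GG_def by linarith
  finally show ?case .
qed



lemma cubic_poly:
  fixes z m u :: real
  shows "((1+z)*(1+z+z^2)*(1-z)^3) * (1 - m*z^2)^3 - ((u-1)*z*(1+z^2)*(1-z)^2) * (1 - m*z^2)^2 * (1 + m*z^2)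
     - ((1+z)*(1+z+z^2)*(1-z)^3) * (1 - m*z^2) * (1 + m*z^2)^2 + ((u-1)*z*(1+z^2)*(1+z)^2) * (1 + m*z^2)^3
   = -4*z^2*(m*((1+z)*(1+z+z^2)*(1-z)^3*(1 - m*z^2)) - (u-1)*(1+z^2)*(1+m*z)*(1+m*z^2)*(1+m*z^3))"
  by algebra

lemma cubic_m:
  fixes z m u :: real
  assumes z0: "z \<noteq> 0" and zs: "\<bar>z\<bar> < 1/4" and p: "1 + m*z^2 \<noteq> 0"
    and eq: "m*((1+z)*(1+z+z^2)*(1-z)^3*(1 - m*z^2)) = (u-1)*(1+z^2)*(1+m*z)*(1+m*z^2)*(1+m*z^3)"
  defines "s \<equiv> v_of u z * (1-z)^2" and "W \<equiv> 2/(1+m*z^2) - 1" and "a \<equiv> (1+z)/(1-z)"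
  shows "W^3 - s*W^2 - W + s*a^2 = 0"
proof -
  have h1: "1 + z \<noteq> 0" "1 - z \<noteq> 0" using zs by auto
  have h2: "1 + z + z^2 \<noteq> 0"
  proof -
    have "z^2 \<ge> 0" by simp
    moreover have "-1/4 < z" using zs by (simp add: abs_less_iff)
    ultimately have "1 + z + z^2 > 0" by linarith
    thus ?thesis by simp
  qed
  define D where "D = (1+z)*(1+z+z^2)*(1-z)^3"
  define pp where "pp = 1 + m*z^2"
  define q where "q = 1 - m*z^2"
  define S0 where "S0 = (u-1)*z*(1+z^2)*(1-z)^2"
  define K where "K = (u-1)*z*(1+z^2)*(1+z)^2"
  have D0: "D \<noteq> 0" unfolding D_def using h1 h2 by simp
  have pp0: "pp \<noteq> 0" using p unfolding pp_def .
  have eW: "W = q / pp" unfolding W_def q_def pp_def using p by (simp add: field_simps)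
  have es: "s = S0 / D" unfolding s_def S0_def D_def v_of_def using h1 h2 by (simp add: field_simps)
  have esa1: "s * a^2 = v_of u z * (1+z)^2" unfolding s_def a_def using h1
    by (simp add: power_divide)
  have esa: "s * a^2 = K / D" unfolding esa1 unfolding K_def D_def v_of_def
    by (simp add: mult_ac)
  have "(W^3 - s*W^2 - W + s*a^2) * (D * pp^3) = D*q^3 - S0*q^2*pp - D*q*pp^2 + K*pp^3"
    unfolding esa unfolding eW es using D0 pp0 by (simp add: field_simps power2_eq_square power3_eq_cube)
  also have "\<dots> = 0"
    using cubic_poly[of z m u] eq unfolding D_def q_def pp_def S0_def K_def by simp
  finally show ?thesis using D0 pp0 by simp
qed



lemma powr_three_halves: "x > 0 \<Longrightarrow> x powr (3/2) = sqrt x ^ 3"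
proof -
  assume x: "x > 0"
  have "x powr (3/2) = x powr (1 + 1/2)" by simp
  also have "\<dots> = x powr 1 * x powr (1/2)" by (rule powr_add)
  also have "\<dots> = x * sqrt x" using x by (simp add: powr_half_sqrt)
  also have "\<dots> = sqrt x ^ 3" using x by (simp add: power3_eq_cube)
  finally show ?thesis .
qed

lemma cubic_cf:
  fixes u z :: real
  assumes z1: "z \<noteq> 1"
    and arg: "\<bar>(- 9 * v_of u z * (1 + 4 * z + z^2) + v_of u z^3 * (1 - z)^6)
             / (3 + v_of u z^2 * (1 - z)^4) powr (3/2)\<bar> \<le> 1"
  defines "s \<equiv> v_of u z * (1-z)^2"
    and "W \<equiv> v_of u z * (1 - z)^2 / 3 + (2/3) * sqrt (3 + v_of u z^2 * (1 - z)^4) * cos (phi_of u z / 3)"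
    and "a \<equiv> (1+z)/(1-z)"
  shows "W^3 - s*W^2 - W + s*a^2 = 0"
proof -
  define v where "v = v_of u z"
  define R where "R = sqrt (3 + s^2)"
  have vs: "v^2 * (1-z)^4 = s^2" unfolding s_def v_def by (simp add: power_mult_distrib power_mult[symmetric])
  have v3: "v^3 * (1-z)^6 = s^3" unfolding s_def v_def by (simp add: power_mult_distrib power_mult[symmetric])
  have R2: "R^2 = 3 + s^2" unfolding R_def by simp
  have Rpos: "R > 0" unfolding R_def by (simp add: add_pos_nonneg)
  have pw: "(3 + v^2 * (1-z)^4) powr (3/2) = R^3"
    unfolding vs R_def by (rule powr_three_halves) (simp add: add_pos_nonneg)
  define A where "A = (- 9 * v * (1 + 4 * z + z^2) + s^3) / R^3"
  have A1: "\<bar>A\<bar> \<le> 1" using arg unfolding A_def v_def[symmetric] pw v3 .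
  have phi: "phi_of u z = arccos A"
    unfolding phi_of_def Let_def v_def[symmetric] pw v3 A_def ..
  define C where "C = cos (arccos A / 3)"
  have "cos (3 * (arccos A / 3)) = A" using A1 by (simp add: cos_arccos_abs)
  hence C3: "4 * C^3 - 3 * C = A" unfolding C_def cos_treble_cos .
  have WW0: "W = s/3 + 2/3 * sqrt (3 + v^2*(1-z)^4) * cos (phi_of u z / 3)"
    unfolding W_def s_def v_def by simp
  have WW: "W = s/3 + (2/3) * R * C"
    unfolding WW0 vs phi R_def C_def by simp
  have "W^3 - s*W^2 - W + s*a^2 = (2/27) * (R^3 * (4*C^3 - 3*C)) - 2* s^3/27 - s/3 + s*a^2 - (2/9)*R*C*(3 + s^2 - R^2)"
    unfolding WW by (simp add: field_simps power2_eq_square power3_eq_cube)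
  also have "\<dots> = (2/27) * (- 9 * v * (1 + 4 * z + z^2) + s^3) - 2* s^3/27 - s/3 + s*a^2"
    using Rpos unfolding C3 R2 A_def by simp
  also have "\<dots> = 0"
    unfolding a_def s_def v_def[symmetric] using z1
    by (simp add: field_simps) (simp add: algebra_simps power2_eq_square)
  finally show ?thesis .
qed

lemma cubic_unique:
  fixes W1 W2 s :: real
  assumes g1: "W1^3 - s*W1^2 - W1 + c = 0" and g2: "W2^3 - s*W2^2 - W2 + c = 0"
    and w1: "\<bar>W1 - 1\<bar> < 1/10" and w2: "\<bar>W2 - 1\<bar> < 1/10" and s: "\<bar>s\<bar> < 1/10"
  shows "W1 = W2"
proof -
  have "(W1 - W2) * (W1^2 + W1*W2 + W2^2 - s*(W1+W2) - 1) = 0"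
    using g1 g2 by (simp add: algebra_simps power2_eq_square power3_eq_cube)
  moreover have "W1^2 + W1*W2 + W2^2 - s*(W1+W2) - 1 > 0"
  proof -
    have a1: "W1 \<ge> 9/10" "W2 \<ge> 9/10" "W1 \<le> 11/10" "W2 \<le> 11/10" using w1 w2 unfolding abs_less_iff by auto
    have "W1*W1 \<ge> 9/10*(9/10)" by (rule mult_mono) (use a1 in auto)
    moreover have "W1*W2 \<ge> 9/10*(9/10)" by (rule mult_mono) (use a1 in auto)
    moreover have "W2*W2 \<ge> 9/10*(9/10)" by (rule mult_mono) (use a1 in auto)
    moreover have "\<bar>s*(W1+W2)\<bar> \<le> 1/10 * (22/10)"
      unfolding abs_mult by (rule mult_mono) (use a1 s in auto)
    ultimately show ?thesis unfolding power2_eq_square by (auto simp: abs_le_iff)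
  qed
  ultimately show ?thesis by simp
qed

lemma final_eq:
  fixes u z m :: real
  assumes z0: "z \<noteq> 0" and p: "1 + m*z^2 > 0"
    and WW: "v_of u z * (1 - z)^2 / 3 + (2/3) * sqrt (3 + v_of u z^2 * (1 - z)^4) * cos (phi_of u z / 3)
              = 2/(1+m*z^2) - 1"
  shows "mu_closed_form u z = m"
proof -
  have "mu_closed_form u z = (1 / z^2) * (2 / (1 + (v_of u z * (1 - z)^2 / 3 + (2/3) * sqrt (3 + v_of u z^2 * (1 - z)^4) * cos (phi_of u z / 3))) - 1)"
    unfolding mu_closed_form_def Let_def by (simp add: add.assoc)
  also have "\<dots> = (1 / z^2) * (2 / (2/(1+m*z^2)) - 1)" unfolding WW by simp
  also have "\<dots> = m" using z0 p by (simp add: field_simps)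
  finally show ?thesis .
qed



lemma rad_of_TT:
  assumes r: "r \<ge> 0" and B: "\<And>N. TT A N r \<le> B"
  shows "ereal r \<le> fps_conv_radius A"
proof -
  have "summable (\<lambda>n. \<bar>fps_nth A n\<bar> * r^n)"
    by (rule bounded_imp_summable[of _ B]) (use r B in \<open>auto simp: TT_def\<close>)
  hence "summable (\<lambda>n. \<bar>fps_nth A n * r^n\<bar>)" using r by (simp add: abs_mult)
  hence "summable (\<lambda>n. fps_nth A n * r^n)" by (rule summable_rabs_cancel)
  hence "norm r \<le> conv_radius (fps_nth A)" by (rule conv_radius_geI)
  thus ?thesis using r by (simp add: fps_conv_radius_def)
qed

lemma radius_pos:
  fixes Z \<mu> :: "real fps" and k :: real
  assumes Z0: "fps_nth Z 0 = 0" and \<mu>0: "fps_nth \<mu> 0 = k"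
    and Zp: "Z = fps_X * (1+Z)^4 - Z * Z^2"
    and D: "D = (1 + Z*1) * (1 + Z*(1+Z)) * (1 + Z*(-1))^3"
    and P: "P = (1 + Z*Z) * (1 + Z*\<mu>) * (1 + Z*(\<mu>*Z)) * (1 + Z*(\<mu>*Z^2))"
    and eq: "\<mu> = fps_const k + fps_const k * (P - 1) + Z*(\<mu>^2*Z*D) - (D-1)*\<mu>"
  shows "\<exists>r>0. ereal r \<le> fps_conv_radius Z \<and> ereal r \<le> fps_conv_radius \<mu>"
proof -
  define M where "M = \<bar>k\<bar> + 1"
  have "isCont (GG k M) 0" unfolding GG_def d1_def by (intro continuous_intros)
  hence "(GG k M \<longlongrightarrow> GG k M 0) (at 0)" by (simp add: isCont_def)
  moreover have "GG k M 0 = 0" by (simp add: GG_def d1_def)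
  ultimately have "eventually (\<lambda>x. GG k M x < 1) (at 0)" using order_tendstoD(2)[of "GG k M" 0 "at 0" 1] by simp
  then obtain d where d: "d > 0" "\<And>x. x \<noteq> 0 \<Longrightarrow> dist x 0 < d \<Longrightarrow> GG k M x < 1"
    unfolding eventually_at by auto
  define \<zeta> where "\<zeta> = min (d/2) (1/2)"
  have z: "0 < \<zeta>" "\<zeta> \<le> 1/2" using d unfolding \<zeta>_def by auto
  have "GG k M \<zeta> < 1" by (rule d(2)) (use z d in \<open>auto simp: dist_real_def \<zeta>_def\<close>)
  hence G: "GG k M \<zeta> \<le> 1" by simp
  define r where "r = \<zeta>/32"
  have r0: "r > 0" using z unfolding r_def by simp
  have ZB: "TT Z N r \<le> \<zeta>" for N by (rule Z_bound[OF Z0 Zp z r_def])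
  have MB: "TT \<mu> N r \<le> M" for N
    by (rule mu_bound[OF Z0 \<mu>0 ZB _ D P eq M_def G]) (use r0 in simp)
  show ?thesis
    using rad_of_TT[of r Z, OF _ ZB] rad_of_TT[of r \<mu>, OF _ MB] r0 by auto
qed

lemma rad_mult: "norm t < fps_conv_radius f \<Longrightarrow> norm t < fps_conv_radius g \<Longrightarrow> norm t < fps_conv_radius (f*g)"
  using fps_conv_radius_mult[of f g] by (auto simp: min_def split: if_splits intro: less_le_trans)
lemma rad_add: "norm t < fps_conv_radius f \<Longrightarrow> norm t < fps_conv_radius g \<Longrightarrow> norm t < fps_conv_radius (f+g)"
  using fps_conv_radius_add[of f g] by (auto simp: min_def split: if_splits intro: less_le_trans)
lemma rad_diff: "norm t < fps_conv_radius f \<Longrightarrow> norm t < fps_conv_radius g \<Longrightarrow> norm t < fps_conv_radius (f-g)"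
  using fps_conv_radius_diff[of f g] by (auto simp: min_def split: if_splits intro: less_le_trans)
lemma rad_power: "norm t < fps_conv_radius f \<Longrightarrow> norm t < fps_conv_radius (f^n)"
  using fps_conv_radius_power[of f n] by (auto intro: less_le_trans)

lemma radr_mult: "ereal \<bar>t::real\<bar> < fps_conv_radius f \<Longrightarrow> ereal \<bar>t\<bar> < fps_conv_radius g \<Longrightarrow> ereal \<bar>t\<bar> < fps_conv_radius (f*g)"
  using rad_mult[of t f g] by simp
lemma radr_add: "ereal \<bar>t::real\<bar> < fps_conv_radius f \<Longrightarrow> ereal \<bar>t\<bar> < fps_conv_radius g \<Longrightarrow> ereal \<bar>t\<bar> < fps_conv_radius (f+g)"
  using rad_add[of t f g] by simp
lemma radr_diff: "ereal \<bar>t::real\<bar> < fps_conv_radius f \<Longrightarrow> ereal \<bar>t\<bar> < fps_conv_radius g \<Longrightarrow> ereal \<bar>t\<bar> < fps_conv_radius (f-g)"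
  using rad_diff[of t f g] by simp
lemma radr_power: "ereal \<bar>t::real\<bar> < fps_conv_radius f \<Longrightarrow> ereal \<bar>t\<bar> < fps_conv_radius (f^n)"
  using rad_power[of t f n] by simp

lemmas eval_simps = eval_fps_mult eval_fps_add eval_fps_diff eval_fps_power radr_mult radr_add radr_diff radr_power

theorem proposition5:
  fixes Z \<mu> :: "real fps" and u :: real
  assumes Z0: "fps_nth Z 0 = 0"
      and Zeq: "Z = fps_X * (1 + Z)^4 / (1 + Z^2)"
      and mueq: "\<mu> = fps_const (u - 1) * (1 + Z^2) * (1 + \<mu> * Z) * (1 + \<mu> * Z^2) * (1 + \<mu> * Z^3)
                   / ((1 + Z) * (1 + Z + Z^2) * (1 - Z)^3 * (1 - \<mu> * Z^2))"
  shows "\<exists>\<epsilon>>0. \<forall>t::real. 0 < \<bar>t\<bar> \<and> \<bar>t\<bar> < \<epsilon> \<longrightarrow>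
           (\<exists>z. (\<lambda>n. fps_nth Z n * t^n) sums z \<and>
                (\<lambda>n. fps_nth \<mu> n * t^n) sums mu_closed_form u z)"
proof -
  define k where "k = u - 1"
  have Zpoly: "Z * (1 + Z^2) = fps_X * (1 + Z)^4"
  proof -
    have n: "fps_nth (1 + Z^2) 0 \<noteq> 0" using Z0 by (simp add: fps_nth_power_0)
    have "Z * (1 + Z^2) = fps_X * (1 + Z)^4 * (inverse (1 + Z^2) * (1 + Z^2))"
      by (subst Zeq) (simp add: fps_divide_unit[OF n] mult_ac)
    also have "\<dots> = fps_X * (1 + Z)^4" using inverse_mult_eq_1[OF n] by simp
    finally show ?thesis .
  qed
  define Den where "Den = (1 + Z) * (1 + Z + Z^2) * (1 - Z)^3 * (1 - \<mu> * Z^2)"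
  define Num where "Num = fps_const (u - 1) * (1 + Z^2) * (1 + \<mu> * Z) * (1 + \<mu> * Z^2) * (1 + \<mu> * Z^3)"
  have mupoly: "\<mu> * Den = Num"
  proof -
    have n: "fps_nth Den 0 \<noteq> 0" using Z0 by (simp add: Den_def fps_nth_power_0)
    have m1: "\<mu> = Num / Den" unfolding Num_def Den_def by (rule mueq)
    have "\<mu> * Den = Num * inverse Den * Den"
      by (subst m1, subst fps_divide_unit[OF n], rule refl)
    also have "\<dots> = Num" using inverse_mult_eq_1[OF n] by (simp add: mult.assoc)
    finally show ?thesis .
  qed
  have \<mu>0: "fps_nth \<mu> 0 = k"
  proof -
    have "fps_nth (\<mu> * Den) 0 = fps_nth Num 0" using mupoly by simp
    thus ?thesis using Z0 by (simp add: Den_def Num_def k_def fps_nth_power_0)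
  qed
  have Zp: "Z = fps_X * (1+Z)^4 - Z * Z^2" using Zpoly by (simp add: algebra_simps)
  define D where "D = (1 + Z*1) * (1 + Z*(1+Z)) * (1 + Z*(-1::real fps))^3"
  define P where "P = (1 + Z*Z) * (1 + Z*\<mu>) * (1 + Z*(\<mu>*Z)) * (1 + Z*(\<mu>*Z^2))"
  have eqm: "\<mu> = fps_const k + fps_const k * (P - 1) + Z*(\<mu>^2*Z*D) - (D-1)*\<mu>"
    using mupoly unfolding D_def P_def Den_def Num_def k_def by algebra
  obtain r where r: "r > 0" "ereal r \<le> fps_conv_radius Z" "ereal r \<le> fps_conv_radius \<mu>"
    using radius_pos[OF Z0 \<mu>0 Zp D_def P_def eqm] by blast
  define zf where "zf = eval_fps Z"
  define mf where "mf = eval_fps \<mu>"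
  have okZ: "norm t < fps_conv_radius Z" if "\<bar>t\<bar> < r" for t using that by (intro less_le_trans[OF _ r(2)]) simp
  have okM: "norm t < fps_conv_radius \<mu>" if "\<bar>t\<bar> < r" for t using that by (intro less_le_trans[OF _ r(3)]) simp
  have zeq: "zf t * (1 + zf t^2) = t * (1 + zf t)^4" if "\<bar>t\<bar> < r" for t
  proof -
    have "eval_fps (Z * (1 + Z^2)) t = eval_fps (fps_X * (1 + Z)^4) t" using Zpoly by simp
    thus ?thesis using okZ[OF that] unfolding zf_def by (simp add: eval_simps)
  qed
  have meq: "mf t * ((1 + zf t) * (1 + zf t + zf t^2) * (1 - zf t)^3 * (1 - mf t * zf t^2))
      = (u - 1) * (1 + zf t^2) * (1 + mf t * zf t) * (1 + mf t * zf t^2) * (1 + mf t * zf t^3)" if "\<bar>t\<bar> < r" for t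
  proof -
    have "eval_fps (\<mu> * Den) t = eval_fps Num t" using mupoly by simp
    thus ?thesis using okZ[OF that] okM[OF that] unfolding zf_def mf_def Den_def Num_def
      by (simp add: eval_simps)
  qed

  have zc: "continuous (at 0) zf" unfolding zf_def by (rule continuous_eval_fps) (use okZ[of 0] r in simp)
  have zlim: "(zf \<longlongrightarrow> 0) (at 0)"
    using zc Z0 unfolding isCont_def zf_def by (simp add: eval_fps_at_0)
  have mc: "continuous (at 0) mf" unfolding mf_def by (rule continuous_eval_fps) (use okM[of 0] r in simp)
  have mlim: "(mf \<longlongrightarrow> k) (at 0)"
    using mc \<mu>0 unfolding isCont_def mf_def by (simp add: eval_fps_at_0)
  define vf where "vf = (\<lambda>t. v_of u (zf t))"
  have "(vf \<longlongrightarrow> (u-1)*0*(1+0^2)/((1+0)*(1+0+0^2)*(1-0)^3)) (at 0)"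
    unfolding vf_def v_of_def by (intro tendsto_intros zlim) simp
  hence vlim: "(vf \<longlongrightarrow> 0) (at 0)" by simp
  define sf where "sf = (\<lambda>t. vf t * (1 - zf t)^2)"
  have "(sf \<longlongrightarrow> 0 * (1 - 0)^2) (at 0)" unfolding sf_def by (intro tendsto_intros zlim vlim)
  hence slim: "(sf \<longlongrightarrow> 0) (at 0)" by simp
  define af where "af = (\<lambda>t. (- 9 * vf t * (1 + 4 * zf t + zf t^2) + vf t^3 * (1 - zf t)^6)
             / (3 + vf t^2 * (1 - zf t)^4) powr (3/2))"
  have "(af \<longlongrightarrow> (- 9 * 0 * (1 + 4 * 0 + 0^2) + 0^3 * (1 - 0)^6) / (3 + 0^2 * (1 - 0)^4) powr (3/2)) (at 0)"
    unfolding af_def by (intro tendsto_intros zlim vlim) auto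
  hence alim: "(af \<longlongrightarrow> 0) (at 0)" by simp
  have phieq: "phi_of u (zf t) = arccos (af t)" for t
    unfolding phi_of_def Let_def af_def vf_def ..
  have plim: "((\<lambda>t. phi_of u (zf t)) \<longlongrightarrow> arccos 0) (at 0)"
    unfolding phieq by (rule isCont_tendsto_compose[OF isCont_arccos alim]) auto
  define Wc where "Wc = (\<lambda>t. vf t * (1 - zf t)^2 / 3 + (2/3) * sqrt (3 + vf t^2 * (1 - zf t)^4) * cos (phi_of u (zf t) / 3))"
  have "(Wc \<longlongrightarrow> 0 * (1 - 0)^2 / 3 + (2/3) * sqrt (3 + 0^2 * (1 - 0)^4) * cos (arccos 0 / 3)) (at 0)"
    unfolding Wc_def by (intro tendsto_intros zlim vlim plim) auto
  moreover have "0 * (1 - 0)^2 / 3 + (2/3) * sqrt (3 + 0^2 * (1 - 0)^4) * cos (arccos 0 / 3) = (1::real)"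
  proof -
    have "arccos 0 / 3 = pi / 6" by simp
    hence c: "cos (arccos 0 / 3) = sqrt 3 / 2" by (simp add: cos_30)
    have "0 * (1 - 0)^2 / 3 + (2/3) * sqrt (3 + 0^2 * (1 - 0)^4) * cos (arccos 0 / 3) = (2/3) * sqrt 3 * cos (arccos 0 / (3::real))"
      by simp
    also have "\<dots> = (2/3) * sqrt 3 * (sqrt 3 / 2)" by (simp only: c)
    also have "\<dots> = 1" by simp
    finally show ?thesis .
  qed
  ultimately have Wclim: "(Wc \<longlongrightarrow> 1) (at 0)" by simp
  define Wm where "Wm = (\<lambda>t. 2 / (1 + mf t * zf t^2) - 1)"
  have "(Wm \<longlongrightarrow> 2 / (1 + k * 0^2) - 1) (at 0)" unfolding Wm_def by (intro tendsto_intros zlim mlim) simp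
  hence Wmlim: "(Wm \<longlongrightarrow> 1) (at 0)" by simp
  have "((\<lambda>t. 1 + mf t * zf t^2) \<longlongrightarrow> 1 + k * 0^2) (at 0)" by (intro tendsto_intros zlim mlim)
  hence pplim: "((\<lambda>t. 1 + mf t * zf t^2) \<longlongrightarrow> 1) (at 0)" by simp
  have ev_abs: "eventually (\<lambda>t. \<bar>f t - c\<bar> < e) (at (0::real))" if "(f \<longlongrightarrow> c) (at 0)" "e > 0" for f :: "real \<Rightarrow> real" and c e
  proof -
    have "((\<lambda>t. \<bar>f t - c\<bar>) \<longlongrightarrow> \<bar>c - c\<bar>) (at 0)" by (intro tendsto_intros that)
    thus ?thesis using order_tendstoD(2)[of "\<lambda>t. \<bar>f t - c\<bar>" 0 "at 0" e] that(2) by simp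
  qed
  have e1: "eventually (\<lambda>t. \<bar>t - 0\<bar> < r) (at (0::real))" by (rule ev_abs[OF tendsto_ident_at r(1)])
  have e2: "eventually (\<lambda>t. \<bar>zf t - 0\<bar> < 1/4) (at 0)" by (rule ev_abs[OF zlim]) simp
  have e3: "eventually (\<lambda>t. \<bar>sf t - 0\<bar> < 1/10) (at 0)" by (rule ev_abs[OF slim]) simp
  have e4: "eventually (\<lambda>t. \<bar>af t - 0\<bar> < 1) (at 0)" by (rule ev_abs[OF alim]) simp
  have e5: "eventually (\<lambda>t. \<bar>Wc t - 1\<bar> < 1/10) (at 0)" by (rule ev_abs[OF Wclim]) simp
  have e6: "eventually (\<lambda>t. \<bar>Wm t - 1\<bar> < 1/10) (at 0)" by (rule ev_abs[OF Wmlim]) simp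
  have e7: "eventually (\<lambda>t. \<bar>(1 + mf t * zf t^2) - 1\<bar> < 1/2) (at 0)" by (rule ev_abs[OF pplim]) simp
  have E: "eventually (\<lambda>t. \<bar>t - 0\<bar> < r \<and> \<bar>zf t - 0\<bar> < 1/4 \<and> \<bar>sf t - 0\<bar> < 1/10 \<and> \<bar>af t - 0\<bar> < 1
      \<and> \<bar>Wc t - 1\<bar> < 1/10 \<and> \<bar>Wm t - 1\<bar> < 1/10 \<and> \<bar>(1 + mf t * zf t^2) - 1\<bar> < 1/2) (at 0)"
    by (intro eventually_conj e1 e2 e3 e4 e5 e6 e7)
  then obtain d where d: "d > 0" and dP: "\<And>t. t \<noteq> 0 \<Longrightarrow> dist t 0 < d \<Longrightarrow>
      \<bar>t - 0\<bar> < r \<and> \<bar>zf t - 0\<bar> < 1/4 \<and> \<bar>sf t - 0\<bar> < 1/10 \<and> \<bar>af t - 0\<bar> < 1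
      \<and> \<bar>Wc t - 1\<bar> < 1/10 \<and> \<bar>Wm t - 1\<bar> < 1/10 \<and> \<bar>(1 + mf t * zf t^2) - 1\<bar> < 1/2"
    unfolding eventually_at by auto
  show ?thesis
  proof (rule exI[of _ d], intro conjI allI impI d)
    fix t :: real assume t: "0 < \<bar>t\<bar> \<and> \<bar>t\<bar> < d"
    have t0: "t \<noteq> 0" using t by auto
    from dP[OF t0] t have tr: "\<bar>t\<bar> < r" and zs: "\<bar>zf t\<bar> < 1/4" and ss: "\<bar>sf t\<bar> < 1/10"
      and as: "\<bar>af t\<bar> < 1" and wc: "\<bar>Wc t - 1\<bar> < 1/10" and wm: "\<bar>Wm t - 1\<bar> < 1/10"
      and pp: "\<bar>(1 + mf t * zf t^2) - 1\<bar> < 1/2"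
      by (auto simp: dist_real_def)
    have ppos: "1 + mf t * zf t^2 > 0" using pp by (auto simp: abs_less_iff)
    have z0: "zf t \<noteq> 0"
    proof
      assume "zf t = 0"
      with zeq[OF tr] have "t = 0" by simp
      with t0 show False by simp
    qed
    have z1: "zf t \<noteq> 1" using zs by auto
    have g1: "Wc t ^ 3 - sf t * Wc t ^ 2 - Wc t + sf t * ((1 + zf t) / (1 - zf t))^2 = 0"
      unfolding Wc_def sf_def vf_def
      by (rule cubic_cf[OF z1]) (use as in \<open>simp add: af_def vf_def\<close>)
    have g2: "Wm t ^ 3 - sf t * Wm t ^ 2 - Wm t + sf t * ((1 + zf t) / (1 - zf t))^2 = 0"
      unfolding Wm_def sf_def vf_def
      by (rule cubic_m[OF z0 zs _ meq[OF tr]]) (use ppos in simp)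
    have WW: "Wc t = Wm t" by (rule cubic_unique[OF g1 g2 wc wm ss])
    have "mu_closed_form u (zf t) = mf t"
      by (rule final_eq[OF z0 ppos]) (use WW in \<open>simp add: Wc_def Wm_def vf_def\<close>)
    moreover have "(\<lambda>n. fps_nth Z n * t^n) sums zf t" unfolding zf_def by (rule sums_eval_fps[OF okZ[OF tr]])
    moreover have "(\<lambda>n. fps_nth \<mu> n * t^n) sums mf t" unfolding mf_def by (rule sums_eval_fps[OF okM[OF tr]])
    ultimately show "\<exists>z. (\<lambda>n. fps_nth Z n * t^n) sums z \<and> (\<lambda>n. fps_nth \<mu> n * t^n) sums mu_closed_form u z"
      by auto
  qed
qed

end
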